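(* Let $G=(N,A)$ be an $s$-$t$ DAG (parallel arcs allowed) and let $uv\in A$. Then $uv$ is an $s$-dominator if and only if $d^+_v\ge 1$ and $d^-_v=1$; and $uv$ is a $t$-dominator if and only if $d^-_u\ge 1$ and $d^+_u=1$.
   Context: An $s$-$t$ DAG is a directed acyclic multigraph with a unique source $s$ and a unique sink $t$ such that every node is reachable from $s$ and every node reaches $t$. $d^-_v$ and $d^+_v$ denote the indegree and outdegree of $v$ (counting parallel arcs). An arc $ab$ $s$-dominates an arc $xy$ if $ab=xy$ or every $s$-$x$ path contains $ab$; $ab$ $t$-dominates $xy$ if $ab=xy$ or every $y$-$t$ path contains $ab$. An arc is an $s$-dominator (resp. $t$-dominator) if it $s$-dominates (resp. $t$-dominates) some arc different from itself. *)

theory Defs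
  imports Main
begin

text \<open>A directed multigraph is given by a node set N, an arc set A (arcs are
  abstract identifiers, so parallel arcs are distinct elements of A), and
  tail/head maps. An arc e goes from tail e to head e.\<close>

fun walk :: "'v set \<Rightarrow> 'a set \<Rightarrow> ('a \<Rightarrow> 'v) \<Rightarrow> ('a \<Rightarrow> 'v) \<Rightarrow> 'v \<Rightarrow> 'a list \<Rightarrow> 'v \<Rightarrow> bool" where
  "walk N A tail head x [] y \<longleftrightarrow> x \<in> N \<and> x = y"
| "walk N A tail head x (e # es) y \<longleftrightarrow> e \<in> A \<and> tail e = x \<and> x \<in> N \<and> walk N A tail head (head e) es y"

definition indeg :: "'a set \<Rightarrow> ('a \<Rightarrow> 'v) \<Rightarrow> 'v \<Rightarrow> nat" where
  "indeg A head v = card {e \<in> A. head e = v}"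

definition outdeg :: "'a set \<Rightarrow> ('a \<Rightarrow> 'v) \<Rightarrow> 'v \<Rightarrow> nat" where
  "outdeg A tail v = card {e \<in> A. tail e = v}"

definition st_dag :: "'v set \<Rightarrow> 'a set \<Rightarrow> ('a \<Rightarrow> 'v) \<Rightarrow> ('a \<Rightarrow> 'v) \<Rightarrow> 'v \<Rightarrow> 'v \<Rightarrow> bool" where
  "st_dag N A tail head s t \<longleftrightarrow>
     finite N \<and> finite A \<and> tail ` A \<subseteq> N \<and> head ` A \<subseteq> N \<and>
     (\<forall>x es. walk N A tail head x es x \<longrightarrow> es = []) \<and>
     s \<in> N \<and> t \<in> N \<and>
     {v \<in> N. indeg A head v = 0} = {s} \<and>
     {v \<in> N. outdeg A tail v = 0} = {t} \<and>
     (\<forall>v \<in> N. (\<exists>es. walk N A tail head s es v) \<and> (\<exists>es. walk N A tail head v es t))"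

definition s_dominates :: "'v set \<Rightarrow> 'a set \<Rightarrow> ('a \<Rightarrow> 'v) \<Rightarrow> ('a \<Rightarrow> 'v) \<Rightarrow> 'v \<Rightarrow> 'a \<Rightarrow> 'a \<Rightarrow> bool" where
  "s_dominates N A tail head s e f \<longleftrightarrow>
     e = f \<or> (\<forall>es. walk N A tail head s es (tail f) \<longrightarrow> e \<in> set es)"

definition t_dominates :: "'v set \<Rightarrow> 'a set \<Rightarrow> ('a \<Rightarrow> 'v) \<Rightarrow> ('a \<Rightarrow> 'v) \<Rightarrow> 'v \<Rightarrow> 'a \<Rightarrow> 'a \<Rightarrow> bool" where
  "t_dominates N A tail head t e f \<longleftrightarrow>
     e = f \<or> (\<forall>es. walk N A tail head (head f) es t \<longrightarrow> e \<in> set es)"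

definition s_dominator :: "'v set \<Rightarrow> 'a set \<Rightarrow> ('a \<Rightarrow> 'v) \<Rightarrow> ('a \<Rightarrow> 'v) \<Rightarrow> 'v \<Rightarrow> 'a \<Rightarrow> bool" where
  "s_dominator N A tail head s e \<longleftrightarrow> (\<exists>f \<in> A. f \<noteq> e \<and> s_dominates N A tail head s e f)"

definition t_dominator :: "'v set \<Rightarrow> 'a set \<Rightarrow> ('a \<Rightarrow> 'v) \<Rightarrow> ('a \<Rightarrow> 'v) \<Rightarrow> 'v \<Rightarrow> 'a \<Rightarrow> bool" where
  "t_dominator N A tail head t e \<longleftrightarrow> (\<exists>f \<in> A. f \<noteq> e \<and> t_dominates N A tail head t e f)"

end

theory Submission
  imports Defs
begin

lemma walk_N: "walk N A tail head x es y \<Longrightarrow> x \<in> N \<and> y \<in> N"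
  by (induction es arbitrary: x) auto

lemma walk_app:
  "walk N A tail head x (xs @ ys) z \<longleftrightarrow> (\<exists>y. walk N A tail head x xs y \<and> walk N A tail head y ys z)"
  by (induction xs arbitrary: x) (auto dest: walk_N)

lemma walk_rev:
  "walk N A tail head x es y \<Longrightarrow> walk N A head tail y (rev es) x"
proof (induction es arbitrary: x)
  case Nil then show ?case by auto
next
  case (Cons e es)
  then have IH: "walk N A head tail y (rev es) (head e)" by simp
  from Cons.prems have "walk N A tail head (head e) es y" by simp
  then have "head e \<in> N" using walk_N by metis
  with Cons.prems IH show ?case by (auto simp: walk_app)
qed

lemma st_dagD:
  assumes "st_dag N A tail head s t"
  shows "finite N" "finite A" "tail ` A \<subseteq> N" "head ` A \<subseteq> N"
    "\<And>x es. walk N A tail head x es x \<Longrightarrow> es = []" "s \<in> N" "t \<in> N"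
    "{v \<in> N. indeg A head v = 0} = {s}" "{v \<in> N. outdeg A tail v = 0} = {t}"
    "\<And>v. v \<in> N \<Longrightarrow> \<exists>es. walk N A tail head s es v"
    "\<And>v. v \<in> N \<Longrightarrow> \<exists>es. walk N A tail head v es t"
  using assms unfolding st_dag_def by auto

lemma mem_card_ge1:
  assumes "finite S" "x \<in> S" shows "card S \<ge> 1"
proof -
  have "S \<noteq> {}" using assms(2) by blast
  then have "card S > 0" using assms(1) by (simp add: card_gt_0_iff)
  then show ?thesis by simp
qed

lemma s_part:
  assumes D: "st_dag N A tail head s t" and eA: "e \<in> A"
  shows "s_dominator N A tail head s e \<longleftrightarrow>
            outdeg A tail (head e) \<ge> 1 \<and> indeg A head (head e) = 1"
proof -
  let ?W = "walk N A tail head"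
  define v where "v = head e"
  have acyc: "\<And>x es. ?W x es x \<Longrightarrow> es = []" using st_dagD(5)[OF D] by blast
  have finA: "finite A" using st_dagD(2)[OF D] .
  have vN: "v \<in> N" using st_dagD(4)[OF D] eA unfolding v_def by blast
  have reach: "\<And>x. x \<in> N \<Longrightarrow> \<exists>es. ?W s es x" using st_dagD(10)[OF D] by blast
  have src: "{x \<in> N. indeg A head x = 0} = {s}" using st_dagD(8)[OF D] .
  have avoid: "\<And>es z. ?W v es z \<Longrightarrow> e \<notin> set es"
  proof
    fix es z assume w: "?W v es z" and "e \<in> set es"
    then obtain xs ys where es: "es = xs @ e # ys" by (meson split_list)
    with w obtain y where "?W v xs y" "?W y (e # ys) z" by (auto simp: walk_app)
    then have "?W v (xs @ [e]) v" using eA by (auto simp: walk_app v_def walk_N)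
    then show False using acyc by blast
  qed
  let ?S = "{g \<in> A. head g = v}"
  have finS: "finite ?S" using finA by simp
  have eS: "e \<in> ?S" using eA v_def by simp
  show ?thesis
  proof
    assume "s_dominator N A tail head s e"
    then obtain f where fA: "f \<in> A" and fe: "f \<noteq> e"
      and dom: "\<forall>es. ?W s es (tail f) \<longrightarrow> e \<in> set es"
      unfolding s_dominator_def s_dominates_def by blast
    have "tail f \<in> N" using st_dagD(3)[OF D] fA by blast
    then obtain p where p: "?W s p (tail f)" using reach by blast
    with dom have "e \<in> set p" by blast
    then obtain xs ys where "p = xs @ e # ys" by (meson split_list)
    with p have ys: "?W v ys (tail f)" by (auto simp: walk_app v_def)
    have "outdeg A tail v \<ge> 1"
    proof (cases ys)
      case Nil
      with ys have "f \<in> {g \<in> A. tail g = v}" using fA by simp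
      then show ?thesis unfolding outdeg_def using finA by (intro mem_card_ge1) auto
    next
      case (Cons g gs)
      with ys have "g \<in> {g \<in> A. tail g = v}" by simp
      then show ?thesis unfolding outdeg_def using finA by (intro mem_card_ge1) auto
    qed
    moreover have "?S = {e}"
    proof (rule ccontr)
      assume "?S \<noteq> {e}"
      with eS obtain g where gA: "g \<in> A" and hg: "head g = v" and ge: "g \<noteq> e" by blast
      have "tail g \<in> N" using st_dagD(3)[OF D] gA by blast
      then obtain q where q: "?W s q (tail g)" using reach by blast
      have "?W s (q @ g # ys) (tail f)" using q ys gA hg by (auto simp: walk_app walk_N)
      with dom have "e \<in> set (q @ g # ys)" by blast
      with ge avoid[OF ys] have "e \<in> set q" by auto
      then obtain q1 q2 where "q = q1 @ e # q2" by (meson split_list)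
      with q have "?W v q2 (tail g)" by (auto simp: walk_app v_def)
      then have "?W v (q2 @ [g]) v" using gA hg by (auto simp: walk_app walk_N)
      then show False using acyc by blast
    qed
    ultimately show "outdeg A tail (head e) \<ge> 1 \<and> indeg A head (head e) = 1"
      unfolding indeg_def v_def by simp
  next
    assume H: "outdeg A tail (head e) \<ge> 1 \<and> indeg A head (head e) = 1"
    then have "card {g \<in> A. tail g = v} > 0" unfolding outdeg_def v_def by simp
    then have "{g \<in> A. tail g = v} \<noteq> {}" by (intro notI) simp
    then obtain f where fA: "f \<in> A" and tf: "tail f = v" by blast
    have fe: "f \<noteq> e"
    proof
      assume "f = e"
      then have "?W v [e] v" using eA tf vN by (simp add: v_def)
      then show False using acyc by blast
    qed
    have c1: "card ?S = 1" using H unfolding indeg_def v_def by simp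
    then obtain x where "?S = {x}" by (rule card_1_singletonE)
    then have S1: "?S = {e}" using eS by simp
    have vs: "v \<noteq> s"
    proof
      assume "v = s"
      then have "v \<in> {x \<in> N. indeg A head x = 0}" using src by simp
      then have "indeg A head v = 0" by simp
      with c1 show False unfolding indeg_def by simp
    qed
    have "\<forall>es. ?W s es (tail f) \<longrightarrow> e \<in> set es"
    proof (intro allI impI)
      fix es assume w: "?W s es (tail f)"
      show "e \<in> set es"
      proof (cases es rule: rev_cases)
        case Nil then show ?thesis using w tf vs by simp
      next
        case (snoc xs g)
        have "?W s (xs @ [g]) (tail f)" using w snoc by simp
        then obtain y where "?W y [g] (tail f)" unfolding walk_app by blast
        then have "g \<in> ?S" using tf by simp
        with S1 snoc show ?thesis by simp
      qed
    qed
    then show "s_dominator N A tail head s e"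
      unfolding s_dominator_def s_dominates_def using fA fe by blast
  qed
qed

lemma td_eq:
  "t_dominates N A tail head t e f \<longleftrightarrow> s_dominates N A head tail t e f"
proof -
  have "(\<forall>es. walk N A head tail t es (head f) \<longrightarrow> e \<in> set es) \<longleftrightarrow>
        (\<forall>es. walk N A tail head (head f) es t \<longrightarrow> e \<in> set es)" (is "?L \<longleftrightarrow> ?R")
  proof
    assume L: ?L
    show ?R
    proof (intro allI impI)
      fix es assume "walk N A tail head (head f) es t"
      then have "walk N A head tail t (rev es) (head f)" by (rule walk_rev)
      with L have "e \<in> set (rev es)" by blast
      then show "e \<in> set es" by simp
    qed
  next
    assume R: ?R
    show ?L
    proof (intro allI impI)
      fix es assume "walk N A head tail t es (head f)"
      then have "walk N A tail head (head f) (rev es) t" by (rule walk_rev)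
      with R have "e \<in> set (rev es)" by blast
      then show "e \<in> set es" by simp
    qed
  qed
  then show ?thesis unfolding t_dominates_def s_dominates_def by blast
qed

theorem lemma5:
  fixes N :: "'v set" and A :: "'a set" and tail head :: "'a \<Rightarrow> 'v" and s t :: 'v and e :: 'a
  assumes "st_dag N A tail head s t"
    and "e \<in> A"
  shows "(s_dominator N A tail head s e \<longleftrightarrow>
            outdeg A tail (head e) \<ge> 1 \<and> indeg A head (head e) = 1)
       \<and> (t_dominator N A tail head t e \<longleftrightarrow>
            indeg A head (tail e) \<ge> 1 \<and> outdeg A tail (tail e) = 1)"
proof
  show "s_dominator N A tail head s e \<longleftrightarrow>
            outdeg A tail (head e) \<ge> 1 \<and> indeg A head (head e) = 1"
    using s_part[OF assms] .
next
  have io: "\<And>h v. indeg A h v = outdeg A h v" unfolding indeg_def outdeg_def by simp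
  note D = st_dagD[OF assms(1)]
  have cyc: "\<forall>x es. walk N A head tail x es x \<longrightarrow> es = []"
  proof (intro allI impI)
    fix x es assume "walk N A head tail x es x"
    then have "walk N A tail head x (rev es) x" by (rule walk_rev)
    then have "rev es = []" by (rule D(5))
    then show "es = []" by simp
  qed
  have r: "\<forall>v \<in> N. (\<exists>es. walk N A head tail t es v) \<and> (\<exists>es. walk N A head tail v es s)"
  proof
    fix v assume v: "v \<in> N"
    obtain p where p: "walk N A tail head s p v" using D(10)[OF v] by blast
    obtain q where q: "walk N A tail head v q t" using D(11)[OF v] by blast
    show "(\<exists>es. walk N A head tail t es v) \<and> (\<exists>es. walk N A head tail v es s)"
      using walk_rev[OF p] walk_rev[OF q] by blast
  qed
  have D': "st_dag N A head tail t s"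
    unfolding st_dag_def
    apply (intro conjI)
    using D(1-4,6-9) cyc r by (simp_all only: io)
  have td: "t_dominator N A tail head t e = s_dominator N A head tail t e"
    unfolding t_dominator_def s_dominator_def td_eq ..
  show "t_dominator N A tail head t e \<longleftrightarrow>
            indeg A head (tail e) \<ge> 1 \<and> outdeg A tail (tail e) = 1"
    unfolding td s_part[OF D' assms(2)] io by (rule refl)
qed

end
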